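(* Let $\mathfrak m,\mathfrak n\in\mathrm{Mult}^{\mathrm{ul}}$, and let $\Delta\in\mathfrak p_{\mathfrak m,\mathfrak n}$ and $\Delta'\in\mathfrak q_{\mathfrak m,\mathfrak n}$. Then at least one of the following holds: (i) $s(\Delta)>s(\Delta')$; (ii) $e(\Delta)>e(\Delta')$; (iii) $\mathrm{csupp}(\Delta)\cap\mathrm{csupp}(\Delta')=\emptyset$.
   Context: $F$ non-archimedean local field, $\nu=|\det(\cdot)|_F$. For cuspidal $\rho$ and reals $a,b$ with $b-a\in\mathbb Z_{\ge0}$, $[a,b]_\rho=\{\nu^a\rho,\dots,\nu^b\rho\}$, $[a,a-1]_\rho=\emptyset$, $s([a,b]_\rho)=\nu^a\rho$, $e([a,b]_\rho)=\nu^b\rho$, $\mathrm{csupp}([a,b]_\rho)$ the set $\{\nu^a\rho,\dots,\nu^b\rho\}$; for cuspidals in one line, $\nu^x\rho>\nu^y\rho$ means $x>y$. Linked: $a<a'\le b+1<b'+1$ or $a'<a\le b'+1<b+1$ (different cuspidal lines: unlinked). $\mathrm{Mult}^{\mathrm{ul}}$ (resp. $\mathrm{Mult}^{\mathrm{ul}}_\rho$): finite multisets of nonempty segments (resp. of the form $[x,y]_\rho$), pairwise unlinked. Construction. For $\mathfrak m_\rho,\mathfrak n_\rho\in\mathrm{Mult}^{\mathrm{ul}}_\rho$: $\mathfrak m_1=\mathfrak m_\rho$, $\mathfrak n_1=\mathfrak n_\rho$; at step $i$ let $\nu^{a_i}\rho$ be the minimal $s(\Delta)$, $\Delta\in\mathfrak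 m_i$, and $[a_i,b_i]_\rho$ the longest segment of $\mathfrak m_i$ beginning there; if $\{[a',b']_\rho\in\mathfrak n_i:a_i\le a'\le b_i\le b'\}\neq\emptyset$ let $[a'_i,b'_i]_\rho$ be its longest element, otherwise $[a'_i,b'_i]_\rho=\emptyset$; $\mathfrak m_{i+1}=\mathfrak m_i-[a_i,b_i]_\rho$, $\mathfrak n_{i+1}=\mathfrak n_i-[a'_i,b'_i]_\rho$; stop when $\mathfrak m_{k+1}=\emptyset$. $\mathfrak p_{\mathfrak m_\rho,\mathfrak n_\rho}=\sum_{i=1}^k[a_i,a'_i-1]_\rho$, $\mathfrak q_{\mathfrak m_\rho,\mathfrak n_\rho}=\sum_{i=1}^k[b_i+1,b'_i]_\rho+\mathfrak n_{k+1}$, with $[a_i,a'_i-1]_\rho:=[a_i,b_i]_\rho$ and $[b_i+1,b'_i]_\rho:=\emptyset$ when $[a'_i,b'_i]_\rho=\emptyset$ (empty segments omitted). For $\mathfrak m,\mathfrak n\in\mathrm{Mult}^{\mathrm{ul}}$ write $\mathfrak m=\sum_i\mathfrak m_{\rho_i}$, $\mathfrak n=\sum_i\mathfrak n_{\rho_i}$ with $\mathfrak m_{\rho_i},\mathfrak n_{\rho_i}\in\mathrm{Mult}^{\mathrm{ul}}_{\rho_i}$ (possibly empty), $\rho_i\not\cong\nu^x\rho_j$ for $i\neq j$, and put $\mathfrak p_{\mathfrak m,\mathfrak n}=\sum_i\mathfrak p_{\mathfrak m_{\rho_i},\mathfrak n_{\rho_i}}$, $\mathfrak q_{\mathfrak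 m,\mathfrak n}=\sum_i\mathfrak q_{\mathfrak m_{\rho_i},\mathfrak n_{\rho_i}}$. *)

theory Defs
  imports Main "HOL-Library.Multiset"
begin

text \<open>Cuspidal representations: a cuspidal line {nu^k rho : k in Z} is indexed by an
abstract label of type 'l; the cuspidal nu^k rho is represented by the pair (l, k).
A segment [a,b]_rho on the line l is represented by Seg l a b (nonempty iff a \<le> b).\<close>

datatype 'l seg = Seg (line: 'l) (lo: int) (hi: int)

type_synonym 'l cusp = "'l \<times> int"

definition s_seg :: "'l seg \<Rightarrow> 'l cusp" where
  "s_seg D = (line D, lo D)"

definition e_seg :: "'l seg \<Rightarrow> 'l cusp" where
  "e_seg D = (line D, hi D)"

definition csupp :: "'l seg \<Rightarrow> 'l cusp set" where
  "csupp D = {(line D, k) | k. lo D \<le> k \<and> k \<le> hi D}"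

definition cusp_gt :: "'l cusp \<Rightarrow> 'l cusp \<Rightarrow> bool" where
  "cusp_gt x y \<longleftrightarrow> fst x = fst y \<and> snd x > snd y"

definition linked :: "'l seg \<Rightarrow> 'l seg \<Rightarrow> bool" where
  "linked D D' \<longleftrightarrow> line D = line D' \<and>
     ((lo D < lo D' \<and> lo D' \<le> hi D + 1 \<and> hi D + 1 < hi D' + 1) \<or>
      (lo D' < lo D \<and> lo D \<le> hi D' + 1 \<and> hi D' + 1 < hi D + 1))"

definition Mult_ul :: "'l seg multiset set" where
  "Mult_ul = {m. (\<forall>D\<in>#m. lo D \<le> hi D) \<and> (\<forall>D\<in>#m. \<forall>D'\<in>#m. \<not> linked D D')}"

definition add_seg :: "'l seg \<Rightarrow> 'l seg multiset \<Rightarrow> 'l seg multiset" where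
  "add_seg D M = (if lo D \<le> hi D then add_mset D M else M)"

inductive pq_run :: "'l \<Rightarrow> 'l seg multiset \<Rightarrow> 'l seg multiset \<Rightarrow> 'l seg multiset \<Rightarrow> 'l seg multiset \<Rightarrow> bool"
  for l where
  stop: "pq_run l {#} n {#} n"
| match: "\<lbrakk> m \<noteq> {#};
     a = Min (lo ` set_mset m);
     b = Max {hi D | D. D \<in># m \<and> lo D = a};
     Seg l a' b' \<in># n; a \<le> a'; a' \<le> b; b \<le> b';
     \<forall>D\<in>#n. (a \<le> lo D \<and> lo D \<le> b \<and> b \<le> hi D) \<longrightarrow> hi D - lo D \<le> b' - a';
     pq_run l (m - {#Seg l a b#}) (n - {#Seg l a' b'#}) p q \<rbrakk>
   \<Longrightarrow> pq_run l m n (add_seg (Seg l a (a' - 1)) p) (add_seg (Seg l (b + 1) b') q)"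
| nomatch: "\<lbrakk> m \<noteq> {#};
     a = Min (lo ` set_mset m);
     b = Max {hi D | D. D \<in># m \<and> lo D = a};
     \<not> (\<exists>D\<in>#n. a \<le> lo D \<and> lo D \<le> b \<and> b \<le> hi D);
     pq_run l (m - {#Seg l a b#}) n p q \<rbrakk>
   \<Longrightarrow> pq_run l m n (add_mset (Seg l a b) p) q"

definition restr :: "'l \<Rightarrow> 'l seg multiset \<Rightarrow> 'l seg multiset" where
  "restr l m = filter_mset (\<lambda>D. line D = l) m"

definition pq :: "'l seg multiset \<Rightarrow> 'l seg multiset \<Rightarrow> 'l seg multiset \<Rightarrow> 'l seg multiset \<Rightarrow> bool" where
  "pq m n p q \<longleftrightarrow> (\<exists>P Q. (\<forall>l. pq_run l (restr l m) (restr l n) (P l) (Q l)) \<and>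
      p = (\<Sum>l\<in>line ` set_mset (m + n). P l) \<and> q = (\<Sum>l\<in>line ` set_mset (m + n). Q l))"

end

theory Submission
  imports Defs
begin

definition good :: "'l seg \<Rightarrow> 'l seg \<Rightarrow> bool" where
  "good D D' \<longleftrightarrow> lo D' < lo D \<or> hi D' < hi D \<or> hi D < lo D' \<or> hi D' < lo D"

lemma key_facts:
  assumes "m \<noteq> {#}" "a = Min (lo ` set_mset m)" "b = Max {hi D | D. D \<in># m \<and> lo D = a}"
  shows "\<exists>A\<in>#m. lo A = a \<and> hi A = b" "\<forall>A\<in>#m. a \<le> lo A" "\<forall>A\<in>#m. lo A = a \<longrightarrow> hi A \<le> b"
proof -
  have fin: "finite (lo ` set_mset m)" by simp
  have ne: "lo ` set_mset m \<noteq> {}" using assms(1) by simp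
  have "a \<in> lo ` set_mset m" using Min_in[OF fin ne] assms(2) by simp
  then obtain A0 where A0: "A0 \<in># m" "lo A0 = a" by auto
  have fin2: "finite {hi D | D. D \<in># m \<and> lo D = a}"
  proof -
    have "{hi D | D. D \<in># m \<and> lo D = a} \<subseteq> hi ` set_mset m" by auto
    then show ?thesis using finite_subset by blast
  qed
  have ne2: "{hi D | D. D \<in># m \<and> lo D = a} \<noteq> {}" using A0 by auto
  have "b \<in> {hi D | D. D \<in># m \<and> lo D = a}" using Max_in[OF fin2 ne2] assms(3) by simp
  then show "\<exists>A\<in>#m. lo A = a \<and> hi A = b" by auto
  show "\<forall>A\<in>#m. a \<le> lo A" using assms(2) fin by auto
  show "\<forall>A\<in>#m. lo A = a \<longrightarrow> hi A \<le> b"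
  proof (intro ballI impI)
    fix A assume "A \<in># m" "lo A = a"
    then have "hi A \<in> {hi D | D. D \<in># m \<and> lo D = a}" by auto
    then show "hi A \<le> b" using Max_ge[OF fin2] assms(3) by simp
  qed
qed

lemma p_shape:
  assumes "pq_run l m n p q" "D \<in># p"
  shows "\<exists>A\<in>#m. lo D = lo A \<and> hi D \<le> hi A \<and> line D = l"
  using assms
proof (induction arbitrary: D rule: pq_run.induct)
  case (stop n)
  then show ?case by simp
next
  case (match m a b a' b' n p q)
  obtain A0 where A0: "A0 \<in># m" "lo A0 = a" "hi A0 = b" using key_facts[OF match(1,2,3)] by blast
  show ?case
  proof (cases "D \<in># p")
    case True
    then show ?thesis using match.IH by (meson in_diffD)
  next
    case False
    then have "D = Seg l a (a' - 1)" using match.prems by (auto simp: add_seg_def split: if_splits)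
    moreover have "a' \<le> b" by fact
    ultimately show ?thesis using A0 by (intro bexI[of _ A0]) auto
  qed
next
  case (nomatch m a b n p q)
  obtain A0 where A0: "A0 \<in># m" "lo A0 = a" "hi A0 = b" using key_facts[OF nomatch(1,2,3)] by blast
  show ?case
  proof (cases "D \<in># p")
    case True
    then show ?thesis using nomatch.IH by (meson in_diffD)
  next
    case False
    then have "D = Seg l a b" using nomatch.prems by auto
    then show ?thesis using A0 by auto
  qed
qed

lemma q_shape:
  assumes "pq_run l m n p q" "D' \<in># q"
  shows "D' \<in># n \<or> (\<exists>A\<in>#m. \<exists>B\<in>#n. D' = Seg l (hi A + 1) (hi B) \<and> lo A \<le> lo B \<and> lo B \<le> hi A \<and> hi A < hi B)"
  using assms
proof (induction arbitrary: D' rule: pq_run.induct)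
  case (stop n)
  then show ?case by simp
next
  case (match m a b a' b' n p q)
  obtain A0 where A0: "A0 \<in># m" "lo A0 = a" "hi A0 = b" using key_facts[OF match(1,2,3)] by blast
  show ?case
  proof (cases "D' \<in># q")
    case True
    then show ?thesis using match.IH by (meson in_diffD)
  next
    case False
    then have "D' = Seg l (b + 1) b'" "b < b'" using match.prems by (auto simp: add_seg_def split: if_splits)
    then show ?thesis using A0 match.hyps by force
  qed
next
  case (nomatch m a b n p q)
  then show ?case by (meson in_diffD)
qed

lemma main_line:
  assumes "pq_run l m n p q"
  shows "(\<forall>A\<in>#m. line A = l) \<Longrightarrow> (\<forall>B\<in>#n. line B = l)
    \<Longrightarrow> (\<forall>A\<in>#m. \<forall>A'\<in>#m. \<not> linked A A')
    \<Longrightarrow> (\<forall>B\<in>#n. \<forall>B'\<in>#n. \<not> linked B B')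
    \<Longrightarrow> D \<in># p \<Longrightarrow> D' \<in># q \<Longrightarrow> good D D'"
  using assms
proof (induction arbitrary: D D' rule: pq_run.induct)
  case (stop n)
  then show ?case by simp
next
  case (match m a b a' b' n p q)
  obtain A0 where A0: "A0 \<in># m" "lo A0 = a" "hi A0 = b" using key_facts[OF match(1,2,3)] by blast
  have amin: "\<forall>A\<in>#m. a \<le> lo A" and bmax: "\<forall>A\<in>#m. lo A = a \<longrightarrow> hi A \<le> b"
    using key_facts[OF match(1,2,3)] by blast+
  have mx: "\<forall>D\<in>#n. (a \<le> lo D \<and> lo D \<le> b \<and> b \<le> hi D) \<longrightarrow> hi D - lo D \<le> b' - a'" by fact
  have hy: "Seg l a' b' \<in># n" "a \<le> a'" "a' \<le> b" "b \<le> b'" by fact+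
  have run: "pq_run l (m - {#Seg l a b#}) (n - {#Seg l a' b'#}) p q" by fact
  consider (nn) "D = Seg l a (a' - 1)" "a \<le> a' - 1" "D' = Seg l (b + 1) b'" "b + 1 \<le> b'"
    | (no) "D = Seg l a (a' - 1)" "a \<le> a' - 1" "D' \<in># q"
    | (on) "D \<in># p" "D' = Seg l (b + 1) b'" "b + 1 \<le> b'"
    | (oo) "D \<in># p" "D' \<in># q"
    using match.prems(5,6) by (auto simp: add_seg_def split: if_splits)
  then show ?case
  proof cases
    case nn
    then show ?thesis using hy by (simp add: good_def)
  next
    case no
    from q_shape[OF run no(3)] show ?thesis
    proof
      assume "D' \<in># n - {#Seg l a' b'#}"
      then have D'n: "D' \<in># n" by (meson in_diffD)
      have "\<not> linked D' (Seg l a' b')" using match.prems(4) D'n hy(1) by blast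
      moreover have "line D' = l" using match.prems(2) D'n by blast
      moreover have "a \<le> lo D' \<and> lo D' \<le> b \<and> b \<le> hi D' \<longrightarrow> hi D' - lo D' \<le> b' - a'" using mx D'n by blast
      ultimately show ?thesis using no hy by (auto simp: good_def linked_def)
    next
      assume "\<exists>A\<in>#m - {#Seg l a b#}. \<exists>B\<in>#n - {#Seg l a' b'#}. D' = Seg l (hi A + 1) (hi B) \<and> lo A \<le> lo B \<and> lo B \<le> hi A \<and> hi A < hi B"
      then obtain A B where AB: "A \<in># m" "B \<in># n" "D' = Seg l (hi A + 1) (hi B)" "lo A \<le> lo B" "lo B \<le> hi A" "hi A < hi B"
        by (meson in_diffD)
      have "\<not> linked B (Seg l a' b')" using match.prems(4) AB hy(1) by blast
      moreover have "line B = l" using match.prems(2) AB by blast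
      moreover have "a \<le> lo B \<and> lo B \<le> b \<and> b \<le> hi B \<longrightarrow> hi B - lo B \<le> b' - a'" using mx AB by blast
      moreover have "a \<le> lo A" using amin AB by blast
      ultimately show ?thesis using no hy AB by (auto simp: good_def linked_def)
    qed
  next
    case on
    obtain A where A: "A \<in># m - {#Seg l a b#}" "lo D = lo A" "hi D \<le> hi A" "line D = l"
      using p_shape[OF run on(1)] by blast
    then have Am: "A \<in># m" by (meson in_diffD)
    have "\<not> linked A0 A" using match.prems(3) Am A0 by blast
    moreover have "line A0 = l" "line A = l" using match.prems(1) Am A0 by blast+
    moreover have "a \<le> lo A" "lo A = a \<longrightarrow> hi A \<le> b" using amin bmax Am by blast+
    ultimately show ?thesis using on A A0 by (auto simp: good_def linked_def)
  next
    case oo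
    show ?thesis
      by (rule match.IH[OF _ _ _ _ oo]) (use match.prems in \<open>meson in_diffD\<close>)+
  qed
next
  case (nomatch m a b n p q)
  have amin: "\<forall>A\<in>#m. a \<le> lo A" using key_facts[OF nomatch(1,2,3)] by blast
  have nm: "\<not> (\<exists>D\<in>#n. a \<le> lo D \<and> lo D \<le> b \<and> b \<le> hi D)" by fact
  have run: "pq_run l (m - {#Seg l a b#}) n p q" by fact
  show ?case
  proof (cases "D \<in># p")
    case True
    show ?thesis
      by (rule nomatch.IH[OF _ _ _ _ True nomatch.prems(6)]) (use nomatch.prems in \<open>meson in_diffD\<close>)+
  next
    case False
    then have D: "D = Seg l a b" using nomatch.prems by auto
    from q_shape[OF run nomatch.prems(6)] show ?thesis
    proof
      assume "D' \<in># n"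
      then show ?thesis using nm D by (auto simp: good_def)
    next
      assume "\<exists>A\<in>#m - {#Seg l a b#}. \<exists>B\<in>#n. D' = Seg l (hi A + 1) (hi B) \<and> lo A \<le> lo B \<and> lo B \<le> hi A \<and> hi A < hi B"
      then obtain A B where AB: "A \<in># m" "B \<in># n" "D' = Seg l (hi A + 1) (hi B)" "lo A \<le> lo B" "lo B \<le> hi A" "hi A < hi B"
        by (meson in_diffD)
      have "a \<le> lo A" using amin AB by blast
      then show ?thesis using nm D AB by (auto simp: good_def)
    qed
  qed
qed

lemma in_sum_mset_fin:
  assumes "finite A" "x \<in># (\<Sum>a\<in>A. f a)"
  shows "\<exists>a\<in>A. x \<in># f a"
  using assms by (induction A rule: finite_induct) auto

lemma q_line:
  assumes "pq_run l m n p q" "D' \<in># q" "\<forall>B\<in>#n. line B = l"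
  shows "line D' = l"
  using q_shape[OF assms(1,2)] assms(3) by auto

theorem lemma5p2:
  fixes m n p q :: "'l seg multiset" and D D' :: "'l seg"
  assumes "m \<in> Mult_ul" and "n \<in> Mult_ul"
    and "pq m n p q"
    and "D \<in># p" and "D' \<in># q"
  shows "cusp_gt (s_seg D) (s_seg D') \<or> cusp_gt (e_seg D) (e_seg D') \<or> csupp D \<inter> csupp D' = {}"
proof -
  obtain P Q where PQ: "\<forall>l. pq_run l (restr l m) (restr l n) (P l) (Q l)"
    "p = (\<Sum>l\<in>line ` set_mset (m + n). P l)" "q = (\<Sum>l\<in>line ` set_mset (m + n). Q l)"
    using assms(3) unfolding pq_def by blast
  obtain l1 where l1: "D \<in># P l1" using in_sum_mset_fin[of _ D P] assms(4) PQ(2) by blast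
  obtain l2 where l2: "D' \<in># Q l2" using in_sum_mset_fin[of _ D' Q] assms(5) PQ(3) by blast
  have L1: "line D = l1" using p_shape[OF PQ(1)[rule_format, of l1] l1] by blast
  have L2: "line D' = l2" using q_line[OF PQ(1)[rule_format, of l2] l2] by (simp add: restr_def)
  show ?thesis
  proof (cases "l1 = l2")
    case False
    then have "csupp D \<inter> csupp D' = {}" using L1 L2 by (auto simp: csupp_def)
    then show ?thesis by blast
  next
    case True
    have "good D D'"
      apply (rule main_line[OF PQ(1)[rule_format, of l1] _ _ _ _ l1])
      using l2 True assms(1,2) by (auto simp: restr_def Mult_ul_def)
    then show ?thesis using L1 L2 True
      by (auto simp: good_def cusp_gt_def s_seg_def e_seg_def csupp_def)
  qed
qed

end
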